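(* Let $l\ge-\tfrac12$. There exist constants $A_1,A_2$ depending only on $l$ such that for all $0<\eta<\xi$: $$\int_\eta^\xi V_1(z;\xi,\eta)\,z^{l-\frac12}\,dz\le A_1(\xi-\eta)^{l+\frac12},\qquad\int_0^\eta V_2(z;\xi,\eta)\,z^{l-\frac12}\,dz\le A_2(\xi-\eta)^{l+\frac12}.$$
   Context: Let ${}_2F_1$ denote the Gauss hypergeometric function (analytically continued to $(-\infty,0)$). For $0<\eta<z<\xi$ put $\sigma_1=\frac{(z-\xi)\eta}{(z-\eta)\xi}$ and $V_1(z;\xi,\eta)=\frac{(z-\eta)^l\xi^l}{z^{2l}}\left|{}_2F_1(-l,-l;1;\sigma_1)\right|$. For $0<z<\eta<\xi$ put $\sigma_2=-\frac{z(\xi-\eta)}{\xi(\eta-z)}$ and $V_2(z;\xi,\eta)=\frac{|\sin(\pi l)|\Gamma^2(1+l)}{\pi\Gamma(2+2l)}\frac{(\xi-\eta)^{1+2l}z}{\xi^{l+1}(\eta-z)^{l+1}}\left|{}_2F_1(1+l,1+l;2+2l;\sigma_2)\right|$. *)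

theory Defs
  imports "HOL-Analysis.Analysis"
begin

definition hyp2F1_series :: "real \<Rightarrow> real \<Rightarrow> real \<Rightarrow> real \<Rightarrow> real" where
  "hyp2F1_series a b c x =
     (\<Sum>n. pochhammer a n * pochhammer b n / (pochhammer c n * fact n) * x ^ n)"

text \<open>Gauss hypergeometric function: the series on \<open>|x| < 1\<close>, and for \<open>x \<le> -1\<close>
  its analytic continuation given by the Pfaff transformation
  \<open>2F1(a,b;c;x) = (1-x)^(-a) 2F1(a,c-b;c;x/(x-1))\<close>, where \<open>x/(x-1) \<in> [1/2,1)\<close>.\<close>
definition hyp2F1 :: "real \<Rightarrow> real \<Rightarrow> real \<Rightarrow> real \<Rightarrow> real" where
  "hyp2F1 a b c x =
     (if \<bar>x\<bar> < 1 then hyp2F1_series a b c x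
      else (1 - x) powr (-a) * hyp2F1_series a (c - b) c (x / (x - 1)))"

definition sigma1 :: "real \<Rightarrow> real \<Rightarrow> real \<Rightarrow> real" where
  "sigma1 z \<xi> \<eta> = ((z - \<xi>) * \<eta>) / ((z - \<eta>) * \<xi>)"

definition V1 :: "real \<Rightarrow> real \<Rightarrow> real \<Rightarrow> real \<Rightarrow> real" where
  "V1 l z \<xi> \<eta> = (z - \<eta>) powr l * \<xi> powr l / z powr (2 * l)
      * \<bar>hyp2F1 (-l) (-l) 1 (sigma1 z \<xi> \<eta>)\<bar>"

definition sigma2 :: "real \<Rightarrow> real \<Rightarrow> real \<Rightarrow> real" where
  "sigma2 z \<xi> \<eta> = - (z * (\<xi> - \<eta>)) / (\<xi> * (\<eta> - z))"

definition V2 :: "real \<Rightarrow> real \<Rightarrow> real \<Rightarrow> real \<Rightarrow> real" where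
  "V2 l z \<xi> \<eta> = \<bar>sin (pi * l)\<bar> * (Gamma (1 + l))\<^sup>2 / (pi * Gamma (2 + 2 * l))
      * ((\<xi> - \<eta>) powr (1 + 2 * l) * z / (\<xi> powr (l + 1) * (\<eta> - z) powr (l + 1)))
      * \<bar>hyp2F1 (1 + l) (1 + l) (2 + 2 * l) (sigma2 z \<xi> \<eta>)\<bar>"

end

theory Submission
  imports Defs
begin


definition cc :: "nat \<Rightarrow> real" where "cc n = pochhammer (1/2) n / fact n"

lemma cc_pos: "cc n > 0"
  unfolding cc_def by (intro divide_pos_pos pochhammer_pos) auto

lemma cc_Suc: "cc (Suc n) = cc n * ((1/2 + real n) / (real n + 1))"
  unfolding cc_def by (simp add: pochhammer_Suc field_simps)

lemma cc_sums: assumes "\<bar>t\<bar> < 1" shows "(\<lambda>n. cc n * t^n) sums ((1 - t) powr (-1/2))"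
proof -
  have "\<bar>-t\<bar> < 1" using assms by simp
  from gen_binomial_real[OF this, of "-1/2"]
  have "(\<lambda>n. ((-1/2) gchoose n) * (-t)^n) sums ((1 + -t) powr (-1/2))" .
  moreover have "((-1/2) gchoose n) * (-t)^n = cc n * t^n" for n
    unfolding cc_def gbinomial_pochhammer
    by (simp add: power_minus[of t] field_simps)
  ultimately show ?thesis by simp
qed

lemma dom:
  fixes a c :: "nat \<Rightarrow> real"
  assumes cpos: "\<And>n. c n > 0" and r: "\<And>n. n \<ge> N \<Longrightarrow> \<bar>a (Suc n)\<bar> * c n \<le> \<bar>a n\<bar> * c (Suc n)"
  shows "\<exists>K\<ge>0. \<forall>n. \<bar>a n\<bar> \<le> K * c n"
proof -
  define K where "K = (\<Sum>m\<le>N. \<bar>a m\<bar> / c m)"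
  have K0: "K \<ge> 0" unfolding K_def by (intro sum_nonneg) (auto intro: divide_nonneg_pos cpos)
  have le1: "\<bar>a m\<bar> / c m \<le> K" if "m \<le> N" for m
    unfolding K_def using that
    by (intro member_le_sum) (auto intro: divide_nonneg_pos cpos)
  have le2: "\<bar>a n\<bar> / c n \<le> \<bar>a N\<bar> / c N" if "n \<ge> N" for n
    using that
  proof (induction n rule: dec_induct)
    case base then show ?case by simp
  next
    case (step n)
    have "\<bar>a (Suc n)\<bar> / c (Suc n) \<le> \<bar>a n\<bar> / c n"
      using r[OF step(1)] cpos[of n] cpos[of "Suc n"] by (simp add: divide_simps mult.commute)
    then show ?case using step by linarith
  qed
  have "\<bar>a n\<bar> \<le> K * c n" for n
  proof -
    have "\<bar>a n\<bar> / c n \<le> K"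
    proof (cases "n \<le> N")
      case True then show ?thesis using le1 by blast
    next
      case False then show ?thesis using le2[of n] le1[of N] by linarith
    qed
    then show ?thesis using cpos[of n] by (simp add: divide_simps)
  qed
  then show ?thesis using K0 by blast
qed

lemma series_bound:
  fixes co :: "nat \<Rightarrow> real"
  assumes "\<And>n. \<bar>co n\<bar> \<le> K * cc n" "\<bar>x\<bar> < 1"
  shows "\<bar>\<Sum>n. co n * x^n\<bar> \<le> K * (1 - \<bar>x\<bar>) powr (-1/2)"
proof -
  have ax: "\<bar>\<bar>x\<bar>\<bar> < 1" using assms by simp
  have s: "(\<lambda>n. K * (cc n * \<bar>x\<bar>^n)) sums (K * (1 - \<bar>x\<bar>) powr (-1/2))"
    using sums_mult[OF cc_sums[OF ax], of K] by simp
  have b: "norm (co n * x^n) \<le> K * (cc n * \<bar>x\<bar>^n)" for n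
    using mult_right_mono[OF assms(1)[of n], of "\<bar>x\<bar>^n"] by (simp add: abs_mult power_abs mult_ac)
  have sm: "summable (\<lambda>n. norm (co n * x^n))"
    by (rule summable_comparison_test[OF _ sums_summable[OF s]]) (use b in auto)
  have "\<bar>\<Sum>n. co n * x^n\<bar> \<le> (\<Sum>n. \<bar>co n * x^n\<bar>)"
    using summable_rabs[OF sm[simplified]] by simp
  also have "\<dots> \<le> (\<Sum>n. K * (cc n * \<bar>x\<bar>^n))"
    by (rule suminf_le) (use b sm sums_summable[OF s] in auto)
  also have "\<dots> = K * (1 - \<bar>x\<bar>) powr (-1/2)" using s by (simp add: sums_iff)
  finally show ?thesis .
qed

definition co :: "real \<Rightarrow> real \<Rightarrow> real \<Rightarrow> nat \<Rightarrow> real" where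
  "co a b c n = pochhammer a n * pochhammer b n / (pochhammer c n * fact n)"

lemma F_bound:
  assumes c: "c > 0" and r: "\<And>n. n \<ge> N \<Longrightarrow> \<bar>(a + real n) * (b + real n)\<bar> \<le> (c + real n) * (real n + 1/2)"
  shows "\<exists>K\<ge>0. \<forall>x. \<bar>x\<bar> < 1 \<longrightarrow> \<bar>hyp2F1_series a b c x\<bar> \<le> K * (1 - \<bar>x\<bar>) powr (-1/2)"
proof -
  have pc: "pochhammer c n > 0" for n using c by (intro pochhammer_pos)
  have cS: "co a b c (Suc n) = co a b c n * ((a + n) * (b + n) / ((c + n) * (n + 1)))" for n
    using pc[of n] c unfolding co_def by (simp add: pochhammer_Suc field_simps)
  have "\<bar>co a b c (Suc n)\<bar> * cc n \<le> \<bar>co a b c n\<bar> * cc (Suc n)" if "n \<ge> N" for n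
  proof -
    have cn: "c + n > 0" using c by simp
    have "\<bar>(a + n) * (b + n) / ((c + n) * (n + 1))\<bar> \<le> (1/2 + real n) / (real n + 1)"
    proof -
      have "\<bar>(a + n) * (b + n) / ((c + n) * (n + 1))\<bar> = \<bar>(a + n) * (b + n)\<bar> / ((c + n) * (n + 1))"
        using cn by (simp add: abs_divide abs_mult)
      also have "\<dots> \<le> ((c + n) * (real n + 1/2)) / ((c + n) * (n + 1))"
        using r[OF that] cn by (intro divide_right_mono) auto
      also have "\<dots> = (1/2 + real n) / (real n + 1)" using cn by (subst nonzero_mult_divide_mult_cancel_left) (auto simp: add.commute)
      finally show ?thesis .
    qed
    then have "\<bar>co a b c n\<bar> * \<bar>(a + n) * (b + n) / ((c + n) * (n + 1))\<bar> * cc n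
        \<le> \<bar>co a b c n\<bar> * ((1/2 + real n) / (real n + 1)) * cc n"
      using cc_pos[of n] by (intro mult_right_mono mult_left_mono) auto
    then show ?thesis unfolding cS cc_Suc by (simp add: abs_mult mult_ac)
  qed
  from dom[of cc N "co a b c", OF cc_pos this] obtain K where K: "K \<ge> 0" "\<And>n. \<bar>co a b c n\<bar> \<le> K * cc n" by blast
  have "\<bar>hyp2F1_series a b c x\<bar> \<le> K * (1 - \<bar>x\<bar>) powr (-1/2)" if "\<bar>x\<bar> < 1" for x
    using series_bound[OF K(2) that] unfolding hyp2F1_series_def co_def .
  then show ?thesis using K by blast
qed



lemma K1_ex: assumes "l \<ge> -1/2"
  shows "\<exists>K\<ge>0. \<forall>x. \<bar>x\<bar> < 1 \<longrightarrow> \<bar>hyp2F1_series (-l) (-l) 1 x\<bar> \<le> K * (1 - \<bar>x\<bar>) powr (-1/2)"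
proof (rule F_bound[where N="nat \<lceil>l\<rceil>"])
  fix n :: nat assume "nat \<lceil>l\<rceil> \<le> n"
  then have h: "l \<le> real n" by linarith
  have "\<bar>(- l + real n) * (- l + real n)\<bar> = (real n - l) * (real n - l)" using h by simp
  also have "\<dots> \<le> (real n + 1/2) * (real n + 1/2)" using h assms by (intro mult_mono) auto
  also have "\<dots> \<le> (1 + real n) * (real n + 1 / 2)" by (intro mult_right_mono) auto
  finally show "\<bar>(- l + real n) * (- l + real n)\<bar> \<le> (1 + real n) * (real n + 1 / 2)" .
qed simp

lemma K1'_ex: assumes "l \<ge> -1/2"
  shows "\<exists>K\<ge>0. \<forall>x. \<bar>x\<bar> < 1 \<longrightarrow> \<bar>hyp2F1_series (-l) (1 + l) 1 x\<bar> \<le> K * (1 - \<bar>x\<bar>) powr (-1/2)"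
proof (rule F_bound[where N="nat \<lceil>l\<rceil>"])
  fix n :: nat assume "nat \<lceil>l\<rceil> \<le> n"
  then have h: "l \<le> real n" by linarith
  have "\<bar>(- l + real n) * (1 + l + real n)\<bar> = (real n - l) * (1 + l + real n)" using h assms by simp
  also have "\<dots> = real n * real n + real n - (l + 1/2)^2 + 1/4" by (simp add: algebra_simps power2_eq_square)
  also have "\<dots> \<le> (1 + real n) * (real n + 1 / 2)"
  proof -
    have "(l + 1/2)^2 \<ge> 0" by simp
    moreover have "(1 + real n) * (real n + 1 / 2) = real n * real n + real n + real n / 2 + 1/2"
      by (simp add: field_simps)
    ultimately show ?thesis by linarith
  qed
  finally show "\<bar>(- l + real n) * (1 + l + real n)\<bar> \<le> (1 + real n) * (real n + 1 / 2)" .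
qed simp

lemma K2_ex: assumes "l \<ge> -1/2"
  shows "\<exists>K\<ge>0. \<forall>x. \<bar>x\<bar> < 1 \<longrightarrow> \<bar>hyp2F1_series (1 + l) (1 + l) (2 + 2 * l) x\<bar> \<le> K * (1 - \<bar>x\<bar>) powr (-1/2)"
proof (rule F_bound[where N="nat \<lceil>2*l + 2*l^2\<rceil>"])
  fix n :: nat assume "nat \<lceil>2*l + 2*l^2\<rceil> \<le> n"
  then have h: "2*l + 2*l^2 \<le> real n" by linarith
  have "\<bar>(1 + l + real n) * (1 + l + real n)\<bar> = (1 + l + real n) * (1 + l + real n)" using assms by simp
  also have "\<dots> = (2 + 2 * l + real n) * (real n + 1 / 2) - (real n/2 - l - l^2)" by (simp add: algebra_simps power2_eq_square)
  also have "\<dots> \<le> (2 + 2 * l + real n) * (real n + 1 / 2)" using h by simp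
  finally show "\<bar>(1 + l + real n) * (1 + l + real n)\<bar> \<le> (2 + 2 * l + real n) * (real n + 1 / 2)" .
qed (use assms in simp)



lemma V1_A:
  fixes l \<eta> \<xi> z K :: real
  assumes l: "l \<ge> -1/2" and e: "0 < \<eta>" "\<eta> < \<xi>"
    and K: "\<forall>x. \<bar>x\<bar> < 1 \<longrightarrow> \<bar>hyp2F1_series (-l) (-l) 1 x\<bar> \<le> K * (1 - \<bar>x\<bar>) powr (-1/2)" "K \<ge> 0"
    and z: "2*\<xi>*\<eta>/(\<xi>+\<eta>) < z" "z < \<xi>"
  shows "V1 l z \<xi> \<eta> * z powr (l-1/2) \<le> K * (\<xi>-\<eta>) powr (l+1/2) * (\<xi>+\<eta>) powr (-1/2) * (z - 2*\<xi>*\<eta>/(\<xi>+\<eta>)) powr (-1/2)"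
proof -
  define z0 where "z0 = 2*\<xi>*\<eta>/(\<xi>+\<eta>)"
  define u where "u = z - \<eta>"
  define d where "d = \<xi> - \<eta>"
  define w where "w = (\<xi>+\<eta>) * (z - z0)"
  have sp: "\<xi> + \<eta> > 0" using e by simp
  have z0e: "z0 - \<eta> = \<eta> * d / (\<xi>+\<eta>)" unfolding z0_def d_def using sp by (simp add: field_simps)
  have "\<eta> * d / (\<xi>+\<eta>) > 0" using e sp unfolding d_def by (intro divide_pos_pos mult_pos_pos) auto
  then have "z0 > \<eta>" using z0e by simp
  then have u: "u > 0" using z unfolding u_def z0_def by simp
  have zp: "z > 0" using u e unfolding u_def by simp
  have xp: "\<xi> > 0" using e by simp
  have w: "w > 0" unfolding w_def using sp z z0_def by simp
  have wz: "w = z*(\<xi>+\<eta>) - 2*\<xi>*\<eta>" unfolding w_def z0_def using sp by (simp add: field_simps)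
  define s where "s = (\<xi>-z)*\<eta>/(u*\<xi>)"
  have s0: "s \<ge> 0" unfolding s_def using z u xp e by (intro divide_nonneg_pos) auto
  have sig: "sigma1 z \<xi> \<eta> = - s" unfolding sigma1_def s_def u_def by (simp add: minus_divide_left algebra_simps)
  have "1 - s = w/(u*\<xi>)" unfolding s_def wz u_def using u xp unfolding u_def
    by (simp add: field_simps)
  moreover have "w/(u*\<xi>) > 0" using w u xp by simp
  ultimately have s1: "s < 1" "1 - \<bar>sigma1 z \<xi> \<eta>\<bar> = w/(u*\<xi>)" using s0 sig by auto
  have abs1: "\<bar>sigma1 z \<xi> \<eta>\<bar> < 1" using sig s0 s1 by simp
  have F: "\<bar>hyp2F1 (-l) (-l) 1 (sigma1 z \<xi> \<eta>)\<bar> \<le> K * (w/(u*\<xi>)) powr (-1/2)"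
    using K(1)[rule_format, OF abs1] abs1 unfolding hyp2F1_def s1(2) by simp
  have "V1 l z \<xi> \<eta> * z powr (l-1/2) =
      u powr l * \<xi> powr l / z powr (2*l) * \<bar>hyp2F1 (-l) (-l) 1 (sigma1 z \<xi> \<eta>)\<bar> * z powr (l - 1/2)"
    unfolding V1_def u_def ..
  also have "\<dots> \<le> u powr l * \<xi> powr l / z powr (2*l) * (K * (w/(u*\<xi>)) powr (-1/2)) * z powr (l - 1/2)"
    by (intro mult_right_mono mult_left_mono F) auto
  also have "\<dots> = K * ((u*\<xi>/z) powr (l+1/2) * w powr (-1/2))"
    using u xp zp w by (simp add: powr_def ln_mult ln_div exp_add[symmetric] exp_diff[symmetric] algebra_simps)
  also have "\<dots> \<le> K * (d powr (l+1/2) * w powr (-1/2))"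
  proof -
    have "u*\<xi>/z \<le> d" unfolding d_def u_def using zp z e by (simp add: field_simps)
    then have "(u*\<xi>/z) powr (l+1/2) \<le> d powr (l+1/2)"
      using u xp zp l by (intro powr_mono2) auto
    then show ?thesis using K(2) by (intro mult_left_mono mult_right_mono) auto
  qed
  also have "\<dots> = K * d powr (l+1/2) * (\<xi>+\<eta>) powr (-1/2) * (z - z0) powr (-1/2)"
    unfolding w_def using sp z z0_def by (simp add: powr_mult)
  finally show ?thesis unfolding d_def z0_def .
qed

lemma V1_B:
  fixes l \<eta> \<xi> z K :: real
  assumes l: "l \<ge> -1/2" and e: "0 < \<eta>" "\<eta> < \<xi>"
    and K: "\<forall>x. \<bar>x\<bar> < 1 \<longrightarrow> \<bar>hyp2F1_series (-l) (1 + l) 1 x\<bar> \<le> K * (1 - \<bar>x\<bar>) powr (-1/2)" "K \<ge> 0"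
    and z: "\<eta> < z" "z \<le> 2*\<xi>*\<eta>/(\<xi>+\<eta>)"
  shows "V1 l z \<xi> \<eta> * z powr (l-1/2) \<le> K * (\<xi>-\<eta>) powr (l+1/2) * \<xi> powr (-1/2) * (z - \<eta>) powr (-1/2)"
proof -
  define u where "u = z - \<eta>"
  define d where "d = \<xi> - \<eta>"
  have sp: "\<xi> + \<eta> > 0" using e by simp
  have u: "u > 0" using z unfolding u_def by simp
  have zp: "z > 0" using u e unfolding u_def by simp
  have xp: "\<xi> > 0" using e by simp
  have dp: "d > 0" using e unfolding d_def by simp
  have zx: "z < \<xi>"
  proof -
    have "2*\<xi>*\<eta>/(\<xi>+\<eta>) < \<xi>" using sp e by (simp add: field_simps)
    then show ?thesis using z by simp
  qed
  define s where "s = (\<xi>-z)*\<eta>/(u*\<xi>)"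
  have sig: "sigma1 z \<xi> \<eta> = - s" unfolding sigma1_def s_def u_def by (simp add: minus_divide_left algebra_simps)
  have "z*(\<xi>+\<eta>) \<le> 2*\<xi>*\<eta>" using z sp by (simp add: pos_le_divide_eq)
  then have "u*\<xi> \<le> (\<xi>-z)*\<eta>" unfolding u_def by (simp add: algebra_simps)
  then have s1: "s \<ge> 1" unfolding s_def using u xp by simp
  define q where "q = 1 + s"
  have q: "q = z*d/(u*\<xi>)" unfolding q_def s_def d_def u_def using u xp unfolding u_def
    by (simp add: field_simps)
  have qp: "q > 0" using s1 q_def by simp
  have y: "sigma1 z \<xi> \<eta> / (sigma1 z \<xi> \<eta> - 1) = s / q" unfolding sig q_def using s1
    by (simp add: field_simps)
  have ya: "\<bar>s/q\<bar> < 1" "1 - \<bar>s/q\<bar> = 1/q" using s1 qp unfolding q_def by (auto simp: field_simps)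
  have H: "hyp2F1 (-l) (-l) 1 (sigma1 z \<xi> \<eta>) = q powr l * hyp2F1_series (-l) (1 + l) 1 (s/q)"
    unfolding hyp2F1_def y using s1 sig by (simp add: q_def add.commute)
  have F: "\<bar>hyp2F1 (-l) (-l) 1 (sigma1 z \<xi> \<eta>)\<bar> \<le> q powr l * (K * (1/q) powr (-1/2))"
    unfolding H abs_mult using K(1)[rule_format, OF ya(1)] unfolding ya(2)
    by (simp add: mult_left_mono)
  have "V1 l z \<xi> \<eta> * z powr (l-1/2) =
      u powr l * \<xi> powr l / z powr (2*l) * \<bar>hyp2F1 (-l) (-l) 1 (sigma1 z \<xi> \<eta>)\<bar> * z powr (l - 1/2)"
    unfolding V1_def u_def ..
  also have "\<dots> \<le> u powr l * \<xi> powr l / z powr (2*l) * (q powr l * (K * (1/q) powr (-1/2))) * z powr (l - 1/2)"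
    by (intro mult_right_mono mult_left_mono F) auto
  also have "\<dots> = K * d powr (l+1/2) * \<xi> powr (-1/2) * u powr (-1/2)"
    unfolding q using u xp zp dp by (simp add: powr_def ln_mult ln_div exp_add[symmetric] exp_diff[symmetric] algebra_simps) (simp add: field_simps)
  finally show ?thesis unfolding d_def u_def .
qed

lemma zexp: "0 < (z::real) \<Longrightarrow> z * exp a = exp (ln z + a)" by (simp add: exp_add)

definition PP :: "real \<Rightarrow> real" where
  "PP l = \<bar>sin (pi * l)\<bar> * (Gamma (1 + l))\<^sup>2 / (pi * Gamma (2 + 2 * l))"

lemma V2_eq: "V2 l z \<xi> \<eta> = PP l * ((\<xi> - \<eta>) powr (1 + 2 * l) * z / (\<xi> powr (l + 1) * (\<eta> - z) powr (l + 1)))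
      * \<bar>hyp2F1 (1 + l) (1 + l) (2 + 2 * l) (sigma2 z \<xi> \<eta>)\<bar>"
  unfolding V2_def PP_def ..

lemma V2_A:
  fixes l \<eta> \<xi> z K :: real
  assumes l: "l \<ge> -1/2" and e: "0 < \<eta>" "\<eta> < \<xi>"
    and K: "\<forall>x. \<bar>x\<bar> < 1 \<longrightarrow> \<bar>hyp2F1_series (1 + l) (1 + l) (2 + 2 * l) x\<bar> \<le> K * (1 - \<bar>x\<bar>) powr (-1/2)" "K \<ge> 0"
    and z: "0 < z" "z < \<xi>*\<eta>/(2*\<xi>-\<eta>)"
  shows "V2 l z \<xi> \<eta> * z powr (l-1/2) \<le> \<bar>PP l\<bar> * K * (\<xi>-\<eta>) powr (l+1/2) * (2*\<xi>-\<eta>) powr (-1/2) * (\<xi>*\<eta>/(2*\<xi>-\<eta>) - z) powr (-1/2)"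
proof -
  define z1 where "z1 = \<xi>*\<eta>/(2*\<xi>-\<eta>)"
  define p where "p = \<eta> - z"
  define d where "d = \<xi> - \<eta>"
  define w where "w = (2*\<xi>-\<eta>) * (z1 - z)"
  have tp: "2*\<xi>-\<eta> > 0" using e by simp
  have xp: "\<xi> > 0" using e by simp
  have dp: "d > 0" using e unfolding d_def by simp
  have "z1 < \<eta>" unfolding z1_def using tp e by (simp add: field_simps)
  then have p: "p > 0" using z unfolding p_def z1_def by simp
  have w: "w > 0" unfolding w_def using tp z z1_def by simp
  have wz: "w = \<xi>*\<eta> - z*(2*\<xi>-\<eta>)" unfolding w_def z1_def using tp by (simp add: field_simps)
  define s where "s = z*d/(\<xi>*p)"
  have s0: "s \<ge> 0" unfolding s_def using z p xp dp by simp
  have sig: "sigma2 z \<xi> \<eta> = - s" unfolding sigma2_def s_def p_def d_def by simp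
  have "1 - s = w/(\<xi>*p)" unfolding s_def wz p_def d_def using p xp unfolding p_def
    by (simp add: field_simps)
  moreover have "w/(\<xi>*p) > 0" using w p xp by simp
  ultimately have s1: "s < 1" "1 - \<bar>sigma2 z \<xi> \<eta>\<bar> = w/(\<xi>*p)" using s0 sig by auto
  have abs1: "\<bar>sigma2 z \<xi> \<eta>\<bar> < 1" using sig s0 s1 by simp
  have F: "\<bar>hyp2F1 (1 + l) (1 + l) (2 + 2 * l) (sigma2 z \<xi> \<eta>)\<bar> \<le> K * (w/(\<xi>*p)) powr (-1/2)"
    using K(1)[rule_format, OF abs1] abs1 unfolding hyp2F1_def s1(2) by simp
  define X where "X = d powr (1 + 2 * l) * z / (\<xi> powr (l + 1) * p powr (l + 1))"
  have X0: "X \<ge> 0" unfolding X_def using z by simp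
  have X1: "X = d powr (1 + 2 * l) * z powr 1 / (\<xi> powr (l + 1) * p powr (l + 1))" unfolding X_def using z by simp
  have "V2 l z \<xi> \<eta> * z powr (l-1/2) = PP l * X * \<bar>hyp2F1 (1 + l) (1 + l) (2 + 2 * l) (sigma2 z \<xi> \<eta>)\<bar> * z powr (l - 1/2)"
    unfolding V2_eq X_def d_def p_def ..
  also have "\<dots> \<le> \<bar>PP l\<bar> * X * (K * (w/(\<xi>*p)) powr (-1/2)) * z powr (l - 1/2)"
    using X0 F by (intro mult_right_mono mult_mono) auto
  also have "\<dots> = \<bar>PP l\<bar> * K * (d powr (l+1/2) * (s powr (l+1/2) * w powr (-1/2)))"
    unfolding X1 s_def using z p xp dp w by (simp add: powr_def ln_mult ln_div exp_add[symmetric] exp_diff[symmetric] algebra_simps) (simp add: zexp exp_add[symmetric] field_simps)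
  also have "\<dots> \<le> \<bar>PP l\<bar> * K * (d powr (l+1/2) * (1 * w powr (-1/2)))"
  proof -
    have "s powr (l+1/2) \<le> 1 powr (l+1/2)" using s0 s1 l by (intro powr_mono2) auto
    then show ?thesis using K(2) by (intro mult_left_mono mult_right_mono) auto
  qed
  also have "\<dots> = \<bar>PP l\<bar> * K * d powr (l+1/2) * (2*\<xi>-\<eta>) powr (-1/2) * (z1 - z) powr (-1/2)"
    unfolding w_def using tp z z1_def by (simp add: powr_mult)
  finally show ?thesis unfolding d_def z1_def .
qed

lemma V2_B:
  fixes l \<eta> \<xi> z K :: real
  assumes l: "l \<ge> -1/2" and e: "0 < \<eta>" "\<eta> < \<xi>"
    and K: "\<forall>x. \<bar>x\<bar> < 1 \<longrightarrow> \<bar>hyp2F1_series (1 + l) (1 + l) (2 + 2 * l) x\<bar> \<le> K * (1 - \<bar>x\<bar>) powr (-1/2)" "K \<ge> 0"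
    and z: "\<xi>*\<eta>/(2*\<xi>-\<eta>) \<le> z" "z < \<eta>"
  shows "V2 l z \<xi> \<eta> * z powr (l-1/2) \<le> \<bar>PP l\<bar> * K * (\<xi>-\<eta>) powr (l+1/2) * \<xi> powr (-1/2) * (\<eta> - z) powr (-1/2)"
proof -
  define p where "p = \<eta> - z"
  define d where "d = \<xi> - \<eta>"
  have tp: "2*\<xi>-\<eta> > 0" using e by simp
  have xp: "\<xi> > 0" using e by simp
  have dp: "d > 0" using e unfolding d_def by simp
  have "\<xi>*\<eta>/(2*\<xi>-\<eta>) > 0" using xp e tp by simp
  then have zp: "z > 0" using z by simp
  have p: "p > 0" using z unfolding p_def by simp
  define s where "s = z*d/(\<xi>*p)"
  have sig: "sigma2 z \<xi> \<eta> = - s" unfolding sigma2_def s_def p_def d_def by simp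
  have "\<xi>*\<eta> \<le> z*(2*\<xi>-\<eta>)" using z tp by (simp add: pos_divide_le_eq)
  then have "\<xi>*p \<le> z*d" unfolding p_def d_def by (simp add: algebra_simps)
  then have s1: "s \<ge> 1" unfolding s_def using p xp by simp
  define q where "q = 1 + s"
  have q: "q = \<eta>*(\<xi>-z)/(\<xi>*p)" unfolding q_def s_def d_def p_def using p xp unfolding p_def
    by (simp add: field_simps)
  have qp: "q > 0" using s1 q_def by simp
  have y: "sigma2 z \<xi> \<eta> / (sigma2 z \<xi> \<eta> - 1) = s / q" unfolding sig q_def using s1
    by (simp add: field_simps)
  have ya: "\<bar>s/q\<bar> < 1" "1 - \<bar>s/q\<bar> = 1/q" using s1 qp unfolding q_def by (auto simp: field_simps)
  have H: "hyp2F1 (1 + l) (1 + l) (2 + 2 * l) (sigma2 z \<xi> \<eta>) = q powr (-(1+l)) * hyp2F1_series (1 + l) (1 + l) (2 + 2 * l) (s/q)"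
    unfolding hyp2F1_def y using s1 sig by (simp add: q_def add.commute)
  have F: "\<bar>hyp2F1 (1 + l) (1 + l) (2 + 2 * l) (sigma2 z \<xi> \<eta>)\<bar> \<le> q powr (-(1+l)) * (K * (1/q) powr (-1/2))"
    unfolding H abs_mult using K(1)[rule_format, OF ya(1)] unfolding ya(2)
    by (simp add: mult_left_mono)
  define X where "X = d powr (1 + 2 * l) * z / (\<xi> powr (l + 1) * p powr (l + 1))"
  have X0: "X \<ge> 0" unfolding X_def using zp by simp
  have X1: "X = d powr (1 + 2 * l) * z powr 1 / (\<xi> powr (l + 1) * p powr (l + 1))" unfolding X_def using zp by simp
  define v where "v = \<xi> - z"
  have vp: "v > 0" using z e unfolding v_def by simp
  define r where "r = z*d/(\<eta>*(\<xi>-z))"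
  have r0: "r \<ge> 0" "r \<le> 1"
  proof -
    have xz: "\<xi> - z > 0" using z e by simp
    show "r \<ge> 0" unfolding r_def using zp dp e xz by simp
    have "z*d \<le> \<eta>*(\<xi>-z)" using z e unfolding d_def by (intro mult_mono) auto
    then show "r \<le> 1" unfolding r_def using e xz by simp
  qed
  have "V2 l z \<xi> \<eta> * z powr (l-1/2) = PP l * X * \<bar>hyp2F1 (1 + l) (1 + l) (2 + 2 * l) (sigma2 z \<xi> \<eta>)\<bar> * z powr (l - 1/2)"
    unfolding V2_eq X_def d_def p_def ..
  also have "\<dots> \<le> \<bar>PP l\<bar> * X * (q powr (-(1+l)) * (K * (1/q) powr (-1/2))) * z powr (l - 1/2)"
    using X0 F by (intro mult_right_mono mult_mono) auto
  also have "\<dots> = \<bar>PP l\<bar> * K * (d powr (l+1/2) * (r powr (l+1/2) * (\<xi> powr (-1/2) * p powr (-1/2))))"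
  proof -
    show ?thesis
      unfolding X1 r_def q v_def[symmetric] using zp p xp dp vp e by (simp add: powr_def ln_mult ln_div exp_add[symmetric] exp_diff[symmetric] algebra_simps) (simp add: zexp exp_add[symmetric] field_simps)
  qed
  also have "\<dots> \<le> \<bar>PP l\<bar> * K * (d powr (l+1/2) * (1 * (\<xi> powr (-1/2) * p powr (-1/2))))"
  proof -
    have "r powr (l+1/2) \<le> 1 powr (l+1/2)" using r0 l by (intro powr_mono2) auto
    then show ?thesis using K(2) by (intro mult_left_mono mult_right_mono) auto
  qed
  finally show ?thesis unfolding d_def p_def by (simp add: mult_ac)
qed

lemma hi1:
  fixes a s t :: real
  assumes "a > -1" "s \<le> t"
  shows "((\<lambda>z. (z - s) powr a) has_integral ((t-s) powr (a+1)/(a+1))) {s..t}"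
proof -
  have "((\<lambda>x. x powr a) has_integral ((t-s) powr (a+1)/(a+1))) {0..t-s}"
    using has_integral_powr_from_0[OF assms(1), of "t-s"] assms by simp
  from has_integral_shift_real_ivl[OF this, of "-s"] show ?thesis by simp
qed

lemma hi2:
  fixes a s t :: real
  assumes "a > -1" "s \<le> t"
  shows "((\<lambda>z. (t - z) powr a) has_integral ((t-s) powr (a+1)/(a+1))) {s..t}"
proof -
  have "((\<lambda>z. (z - (-t)) powr a) has_integral ((-s - -t) powr (a+1)/(a+1))) {-t..-s}"
    using hi1[OF assms(1), of "-t" "-s"] assms by simp
  then have "((\<lambda>x. (t - - x) powr a) has_integral ((t-s) powr (a+1)/(a+1))) {-t..-s}"
    by (simp add: add.commute)
  then show ?thesis using has_integral_reflect_real[of "\<lambda>y. (t-y) powr a" _ t s] by (simp only:)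
qed

lemma assemble:
  fixes f gA gB :: "real \<Rightarrow> real"
  assumes iA: "(gA has_integral IA) {aA..bA}" and iB: "(gB has_integral IB) {aB..bB}"
    and pA: "\<And>z. z\<in>{aA..bA} \<Longrightarrow> gA z \<ge> 0" and pB: "\<And>z. z\<in>{aB..bB} \<Longrightarrow> gB z \<ge> 0"
    and c: "\<And>z. z\<in>S \<Longrightarrow> (z \<in> {aA..bA} \<and> f z \<le> gA z) \<or> (z \<in> {aB..bB} \<and> f z \<le> gB z)"
    and B: "IA + IB \<le> B"
  shows "(\<integral>\<^sup>+ z \<in> S. ennreal (f z) \<partial>lborel) \<le> ennreal B"
proof -
  define G where "G z = (if z \<in> {aA..bA} then gA z else 0) + (if z \<in> {aB..bB} then gB z else 0)" for z
  have "((\<lambda>z. if z \<in> {aA..bA} then gA z else 0) has_integral IA) UNIV"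
    using iA by (simp only: has_integral_restrict_UNIV)
  moreover have "((\<lambda>z. if z \<in> {aB..bB} then gB z else 0) has_integral IB) UNIV"
    using iB by (simp only: has_integral_restrict_UNIV)
  ultimately have "(G has_integral (IA + IB)) UNIV" unfolding G_def by (rule has_integral_add)
  moreover have G0: "G z \<ge> 0" for z unfolding G_def using pA pB by auto
  ultimately have eq: "(\<integral>\<^sup>+ z. ennreal (G z) * indicator UNIV z \<partial>lborel) = ennreal (IA + IB)"
    by (intro nn_integral_has_integral_lebesgue') auto
  have "(\<integral>\<^sup>+ z \<in> S. ennreal (f z) \<partial>lborel) \<le> (\<integral>\<^sup>+ z. ennreal (G z) * indicator UNIV z \<partial>lborel)"
  proof (rule nn_integral_mono)
    fix z
    show "ennreal (f z) * indicator S z \<le> ennreal (G z) * indicator UNIV z"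
    proof (cases "z \<in> S")
      case True
      have "f z \<le> G z" proof -
        have "z \<in> {aA..bA} \<Longrightarrow> gA z \<ge> 0" "z \<in> {aB..bB} \<Longrightarrow> gB z \<ge> 0" using pA pB by auto
        then show ?thesis using c[OF True] unfolding G_def by (cases "z \<in> {aA..bA}"; cases "z \<in> {aB..bB}") auto
      qed
      then show ?thesis using True by (simp add: ennreal_leI)
    qed simp
  qed
  also have "\<dots> \<le> ennreal B" unfolding eq using B by (rule ennreal_leI)
  finally show ?thesis .
qed

lemma half_le: "0 \<le> a \<Longrightarrow> a \<le> b \<Longrightarrow> b powr (-1/2) * a powr (1/2) \<le> (1::real)"
proof -
  assume a: "0 \<le> a" "a \<le> b"
  show ?thesis
  proof (cases "b = 0")
    case True then show ?thesis by simp
  next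
    case False
    then have b: "b > 0" using a by simp
    have "b powr (-1/2) * a powr (1/2) \<le> b powr (-1/2) * b powr (1/2)"
      using a by (intro mult_left_mono powr_mono2) auto
    also have "\<dots> = 1" using b by (simp add: powr_add[symmetric])
    finally show ?thesis .
  qed
qed



theorem corollaryA3:
  fixes l :: real
  assumes "l \<ge> -1/2"
  shows "\<exists>A1 A2 :: real. \<forall>\<eta> \<xi> :: real. 0 < \<eta> \<and> \<eta> < \<xi> \<longrightarrow>
           (\<integral>\<^sup>+ z \<in> {\<eta><..<\<xi>}. ennreal (V1 l z \<xi> \<eta> * z powr (l - 1/2)) \<partial>lborel)
              \<le> ennreal (A1 * (\<xi> - \<eta>) powr (l + 1/2)) \<and>
           (\<integral>\<^sup>+ z \<in> {0<..<\<eta>}. ennreal (V2 l z \<xi> \<eta> * z powr (l - 1/2)) \<partial>lborel)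
              \<le> ennreal (A2 * (\<xi> - \<eta>) powr (l + 1/2))"
proof -
  obtain K1 where K1: "K1 \<ge> 0" "\<forall>x. \<bar>x\<bar> < 1 \<longrightarrow> \<bar>hyp2F1_series (-l) (-l) 1 x\<bar> \<le> K1 * (1 - \<bar>x\<bar>) powr (-1/2)"
    using K1_ex[OF assms] by blast
  obtain K1' where K1': "K1' \<ge> 0" "\<forall>x. \<bar>x\<bar> < 1 \<longrightarrow> \<bar>hyp2F1_series (-l) (1 + l) 1 x\<bar> \<le> K1' * (1 - \<bar>x\<bar>) powr (-1/2)"
    using K1'_ex[OF assms] by blast
  obtain K2 where K2: "K2 \<ge> 0" "\<forall>x. \<bar>x\<bar> < 1 \<longrightarrow> \<bar>hyp2F1_series (1 + l) (1 + l) (2 + 2 * l) x\<bar> \<le> K2 * (1 - \<bar>x\<bar>) powr (-1/2)"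
    using K2_ex[OF assms] by blast
  define P where "P = \<bar>PP l\<bar>"
  have P0: "P \<ge> 0" unfolding P_def by simp
  show ?thesis
  proof (rule exI[of _ "2*K1 + 2*K1'"], rule exI[of _ "2*(P*K2) + 2*(P*K2)"], intro allI impI conjI)
    fix \<eta> \<xi> :: real assume h: "0 < \<eta> \<and> \<eta> < \<xi>"
    then have e: "0 < \<eta>" "\<eta> < \<xi>" by auto
    define d where "d = \<xi> - \<eta>"
    define D where "D = d powr (l + 1/2)"
    have D0: "D \<ge> 0" unfolding D_def by simp
    have sp: "\<xi> + \<eta> > 0" "\<xi> > 0" "2*\<xi> - \<eta> > 0" using e by auto
    define z0 where "z0 = 2*\<xi>*\<eta>/(\<xi>+\<eta>)"
    have z0: "\<eta> < z0" "z0 < \<xi>" unfolding z0_def using e sp by (auto simp: field_simps)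
    define z1 where "z1 = \<xi>*\<eta>/(2*\<xi>-\<eta>)"
    have z1a: "0 < z1" "z1 < \<eta>" unfolding z1_def using e sp by (auto simp: field_simps)
    have "\<xi>*\<eta> \<le> (2*\<xi>-\<eta>)*(2*\<xi>-\<eta>)"
    proof -
      have "\<xi>*\<eta> \<le> \<xi>*\<xi>" using e by simp
      also have "\<dots> \<le> (2*\<xi>-\<eta>)*(2*\<xi>-\<eta>)" using e by (intro mult_mono) auto
      finally show ?thesis .
    qed
    then have "z1 \<le> 2*\<xi>-\<eta>" unfolding z1_def using sp by (simp add: pos_divide_le_eq)
    note z1 = z1a this
    define C1 where "C1 = K1 * D * (\<xi>+\<eta>) powr (-1/2)"
    define C2 where "C2 = K1' * D * \<xi> powr (-1/2)"
    show "(\<integral>\<^sup>+ z \<in> {\<eta><..<\<xi>}. ennreal (V1 l z \<xi> \<eta> * z powr (l - 1/2)) \<partial>lborel)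
              \<le> ennreal ((2*K1 + 2*K1') * (\<xi> - \<eta>) powr (l + 1/2))"
    proof (rule assemble[where gA = "\<lambda>z. C1 * (z - z0) powr (-1/2)" and aA = z0 and bA = \<xi>
                          and gB = "\<lambda>z. C2 * (z - \<eta>) powr (-1/2)" and aB = \<eta> and bB = z0])
      show "((\<lambda>z. C1 * (z - z0) powr (-1/2)) has_integral (2 * C1 * (\<xi> - z0) powr (1/2))) {z0..\<xi>}"
        by (rule has_integral_eq_rhs[OF has_integral_mult_right[OF hi1[of "-1/2" z0 \<xi>]]]) (use z0 in auto)
      show "((\<lambda>z. C2 * (z - \<eta>) powr (-1/2)) has_integral (2 * C2 * (z0 - \<eta>) powr (1/2))) {\<eta>..z0}"
        by (rule has_integral_eq_rhs[OF has_integral_mult_right[OF hi1[of "-1/2" \<eta> z0]]]) (use z0 in auto)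
      show "0 \<le> C1 * (z - z0) powr (-1/2)" for z unfolding C1_def using K1 D0 by simp
      show "0 \<le> C2 * (z - \<eta>) powr (-1/2)" for z unfolding C2_def using K1' D0 by simp
      fix z assume zS: "z \<in> {\<eta><..<\<xi>}"
      show "z \<in> {z0..\<xi>} \<and> V1 l z \<xi> \<eta> * z powr (l - 1/2) \<le> C1 * (z - z0) powr (-1/2) \<or>
            z \<in> {\<eta>..z0} \<and> V1 l z \<xi> \<eta> * z powr (l - 1/2) \<le> C2 * (z - \<eta>) powr (-1/2)"
      proof (cases "z \<le> z0")
        case True
        then show ?thesis using V1_B[OF assms e K1'(2) K1'(1), of z] zS
          unfolding C2_def D_def d_def z0_def by auto
      next
        case False
        then show ?thesis using V1_A[OF assms e K1(2) K1(1), of z] zS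
          unfolding C1_def D_def d_def z0_def by auto
      qed
    next
      have a: "2 * C1 * (\<xi> - z0) powr (1/2) \<le> 2 * K1 * D"
      proof -
        have "(\<xi>+\<eta>) powr (-1/2) * (\<xi> - z0) powr (1/2) \<le> 1" using z0 e by (intro half_le) auto
        then have "K1 * D * ((\<xi>+\<eta>) powr (-1/2) * (\<xi> - z0) powr (1/2)) \<le> K1 * D * 1"
          using K1 D0 by (intro mult_left_mono) auto
        then show ?thesis unfolding C1_def by (simp add: mult_ac)
      qed
      have b: "2 * C2 * (z0 - \<eta>) powr (1/2) \<le> 2 * K1' * D"
      proof -
        have "\<xi> powr (-1/2) * (z0 - \<eta>) powr (1/2) \<le> 1" using z0 e by (intro half_le) auto
        then have "K1' * D * (\<xi> powr (-1/2) * (z0 - \<eta>) powr (1/2)) \<le> K1' * D * 1"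
          using K1' D0 by (intro mult_left_mono) auto
        then show ?thesis unfolding C2_def by (simp add: mult_ac)
      qed
      show "2 * C1 * (\<xi> - z0) powr (1/2) + 2 * C2 * (z0 - \<eta>) powr (1/2) \<le> (2*K1 + 2*K1') * (\<xi> - \<eta>) powr (l + 1/2)"
        using a b unfolding D_def d_def by (simp add: algebra_simps)
    qed
    define C3 where "C3 = P * K2 * D * (2*\<xi>-\<eta>) powr (-1/2)"
    define C4 where "C4 = P * K2 * D * \<xi> powr (-1/2)"
    show "(\<integral>\<^sup>+ z \<in> {0<..<\<eta>}. ennreal (V2 l z \<xi> \<eta> * z powr (l - 1/2)) \<partial>lborel)
              \<le> ennreal ((2*(P*K2) + 2*(P*K2)) * (\<xi> - \<eta>) powr (l + 1/2))"
    proof (rule assemble[where gA = "\<lambda>z. C3 * (z1 - z) powr (-1/2)" and aA = 0 and bA = z1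
                          and gB = "\<lambda>z. C4 * (\<eta> - z) powr (-1/2)" and aB = z1 and bB = \<eta>])
      show "((\<lambda>z. C3 * (z1 - z) powr (-1/2)) has_integral (2 * C3 * (z1 - 0) powr (1/2))) {0..z1}"
        by (rule has_integral_eq_rhs[OF has_integral_mult_right[OF hi2[of "-1/2" 0 z1]]]) (use z1 in auto)
      show "((\<lambda>z. C4 * (\<eta> - z) powr (-1/2)) has_integral (2 * C4 * (\<eta> - z1) powr (1/2))) {z1..\<eta>}"
        by (rule has_integral_eq_rhs[OF has_integral_mult_right[OF hi2[of "-1/2" z1 \<eta>]]]) (use z1 in auto)
      show "0 \<le> C3 * (z1 - z) powr (-1/2)" for z unfolding C3_def using K2 D0 P0 by simp
      show "0 \<le> C4 * (\<eta> - z) powr (-1/2)" for z unfolding C4_def using K2 D0 P0 by simp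
      fix z assume zS: "z \<in> {0<..<\<eta>}"
      show "z \<in> {0..z1} \<and> V2 l z \<xi> \<eta> * z powr (l - 1/2) \<le> C3 * (z1 - z) powr (-1/2) \<or>
            z \<in> {z1..\<eta>} \<and> V2 l z \<xi> \<eta> * z powr (l - 1/2) \<le> C4 * (\<eta> - z) powr (-1/2)"
      proof (cases "z < z1")
        case True
        then show ?thesis using V2_A[OF assms e K2(2) K2(1), of z] zS
          unfolding C3_def P_def D_def d_def z1_def by auto
      next
        case False
        then show ?thesis using V2_B[OF assms e K2(2) K2(1), of z] zS
          unfolding C4_def P_def D_def d_def z1_def by auto
      qed
    next
      have a: "2 * C3 * (z1 - 0) powr (1/2) \<le> 2 * (P * K2) * D"
      proof -
        have "(2*\<xi>-\<eta>) powr (-1/2) * z1 powr (1/2) \<le> 1" using z1 by (intro half_le) auto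
        then have "P * K2 * D * ((2*\<xi>-\<eta>) powr (-1/2) * z1 powr (1/2)) \<le> P * K2 * D * 1"
          using K2 D0 P0 by (intro mult_left_mono) auto
        then show ?thesis unfolding C3_def by (simp add: mult_ac)
      qed
      have b: "2 * C4 * (\<eta> - z1) powr (1/2) \<le> 2 * (P * K2) * D"
      proof -
        have "\<xi> powr (-1/2) * (\<eta> - z1) powr (1/2) \<le> 1" using z1 e by (intro half_le) auto
        then have "P * K2 * D * (\<xi> powr (-1/2) * (\<eta> - z1) powr (1/2)) \<le> P * K2 * D * 1"
          using K2 D0 P0 by (intro mult_left_mono) auto
        then show ?thesis unfolding C4_def by (simp add: mult_ac)
      qed
      show "2 * C3 * (z1 - 0) powr (1/2) + 2 * C4 * (\<eta> - z1) powr (1/2) \<le> (2*(P*K2) + 2*(P*K2)) * (\<xi> - \<eta>) powr (l + 1/2)"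
        using a b unfolding D_def d_def by (simp add: algebra_simps)
    qed
  qed
qed

end
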